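(* Let $\mathbf p:\mathbb R^{n\times k}\to\mathbb R^n$ be a permutation equivariant polynomial map. Then there exists a polynomial $p:\mathbb R^{n\times k}\to\mathbb R$ that is invariant under all permutations of the last $n-1$ rows of $\mathbf X$ such that $\mathbf p=\lceil p\rceil$, i.e. $\mathbf p(\mathbf X)=(p(\mathbf X),p(\sigma\cdot\mathbf X),p(\sigma^2\cdot\mathbf X),\dots,p(\sigma^{n-1}\cdot\mathbf X))^T$ for all $\mathbf X$, where $\sigma\in S_n$ is the permutation with $\sigma^{-1}=(1\,2\,3\cdots n)$.
   Context: $\mathbf X=(\mathbf x_1,\dots,\mathbf x_n)^T\in\mathbb R^{n\times k}$; $S_n$ acts by $\sigma\cdot\mathbf X=(\mathbf x_{\sigma^{-1}(1)},\dots,\mathbf x_{\sigma^{-1}(n)})^T$, and on vectors in $\mathbb R^n$ by the same permutation of entries; $\mathbf p$ is permutation equivariant if $\mathbf p(\sigma\cdot\mathbf X)=\sigma\cdot\mathbf p(\mathbf X)$ for all $\sigma\in S_n$. *)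

theory Defs
  imports Complex_Main "HOL-Combinatorics.Permutations"
begin

text \<open>Matrices X in R^(n x k) are represented as functions nat => nat => real,
  X i j being the entry in row i < n, column j < k (rows/columns are 0-indexed).\<close>

inductive poly_fun :: "nat \<Rightarrow> nat \<Rightarrow> ((nat \<Rightarrow> nat \<Rightarrow> real) \<Rightarrow> real) \<Rightarrow> bool"
  for n k where
  const: "poly_fun n k (\<lambda>X. c)"
| coord: "i < n \<Longrightarrow> j < k \<Longrightarrow> poly_fun n k (\<lambda>X. X i j)"
| add: "poly_fun n k f \<Longrightarrow> poly_fun n k g \<Longrightarrow> poly_fun n k (\<lambda>X. f X + g X)"
| mult: "poly_fun n k f \<Longrightarrow> poly_fun n k g \<Longrightarrow> poly_fun n k (\<lambda>X. f X * g X)"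

definition act_rows :: "(nat \<Rightarrow> nat) \<Rightarrow> (nat \<Rightarrow> nat \<Rightarrow> real) \<Rightarrow> (nat \<Rightarrow> nat \<Rightarrow> real)" where
  "act_rows \<sigma> X = (\<lambda>i j. X (inv \<sigma> i) j)"

definition poly_map :: "nat \<Rightarrow> nat \<Rightarrow> ((nat \<Rightarrow> nat \<Rightarrow> real) \<Rightarrow> nat \<Rightarrow> real) \<Rightarrow> bool" where
  "poly_map n k P \<longleftrightarrow> (\<forall>i<n. poly_fun n k (\<lambda>X. P X i))"

definition perm_equivariant :: "nat \<Rightarrow> ((nat \<Rightarrow> nat \<Rightarrow> real) \<Rightarrow> nat \<Rightarrow> real) \<Rightarrow> bool" where
  "perm_equivariant n P \<longleftrightarrow>
     (\<forall>\<sigma> X. \<sigma> permutes {..<n} \<longrightarrow> (\<forall>i<n. P (act_rows \<sigma> X) i = P X (inv \<sigma> i)))"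

text \<open>The n-cycle (1 2 ... n), 0-indexed: i |-> (i+1) mod n on {0..<n}, identity elsewhere.\<close>
definition ncycle :: "nat \<Rightarrow> nat \<Rightarrow> nat" where
  "ncycle n i = (if i < n then Suc i mod n else i)"

definition sigma_shift :: "nat \<Rightarrow> nat \<Rightarrow> nat" where
  "sigma_shift n = inv (ncycle n)"

end

theory Submission
  imports Defs
begin

lemma ncycle_permutes: "ncycle n permutes {..<n}"
proof (rule bij_imp_permutes)
  show "\<And>x. x \<notin> {..<n} \<Longrightarrow> ncycle n x = x" by (simp add: ncycle_def)
  have inj: "inj_on (ncycle n) {..<n}"
  proof (rule inj_onI)
    fix x y assume "x \<in> {..<n}" "y \<in> {..<n}" "ncycle n x = ncycle n y"
    then show "x = y"
      by (auto simp: ncycle_def mod_Suc split: if_splits)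
  qed
  have img: "ncycle n ` {..<n} \<subseteq> {..<n}"
    by (auto simp: ncycle_def)
  show "bij_betw (ncycle n) {..<n} {..<n}"
    using inj img by (simp add: bij_betw_def endo_inj_surj)
qed

lemma funpow_permutes: "f permutes S \<Longrightarrow> (f ^^ m) permutes S"
  by (induct m) (auto simp: permutes_id permutes_compose)

lemma shift_pow: "i < n \<Longrightarrow> (sigma_shift n ^^ i) i = 0"
proof (induct i)
  case 0 then show ?case by simp
next
  case (Suc m)
  have "ncycle n m = Suc m" using Suc.prems by (simp add: ncycle_def)
  moreover have "inj (ncycle n)" using permutes_inj[OF ncycle_permutes] .
  ultimately have "sigma_shift n (Suc m) = m"
    unfolding sigma_shift_def by (metis inv_f_f)
  then show ?case using Suc by (simp only: funpow_Suc_right comp_def)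
qed

theorem lemma1:
  fixes n k :: nat and P :: "(nat \<Rightarrow> nat \<Rightarrow> real) \<Rightarrow> nat \<Rightarrow> real"
  assumes "poly_map n k P" and "perm_equivariant n P"
  shows "\<exists>p. poly_fun n k p
           \<and> (\<forall>\<tau> X. \<tau> permutes {1..<n} \<longrightarrow> p (act_rows \<tau> X) = p X)
           \<and> (\<forall>X. \<forall>i<n. P X i = p (act_rows (sigma_shift n ^^ i) X))"
proof (cases "n = 0")
  case True
  show ?thesis
  proof (intro exI conjI allI impI)
    show "poly_fun n k (\<lambda>X. 0)" by (rule poly_fun.const)
  qed (use True in auto)
next
  case False
  show ?thesis
  proof (intro exI conjI allI impI)
    show "poly_fun n k (\<lambda>X. P X 0)" using assms(1) False by (simp add: poly_map_def)
  next
    fix \<tau> X assume t: "\<tau> permutes {1..<n}"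
    then have t': "\<tau> permutes {..<n}" by (rule permutes_subset) auto
    have "\<tau> 0 = 0" using t by (simp add: permutes_def)
    then have "inv \<tau> 0 = 0" using permutes_inverses(2)[OF t] by metis
    then show "P (act_rows \<tau> X) 0 = P X 0"
      using assms(2) t' False by (simp add: perm_equivariant_def)
  next
    fix X i assume i: "i < n"
    have sp: "sigma_shift n permutes {..<n}"
      unfolding sigma_shift_def by (rule permutes_inv[OF ncycle_permutes])
    have pp: "(sigma_shift n ^^ i) permutes {..<n}" by (rule funpow_permutes[OF sp])
    have "inv (sigma_shift n ^^ i) 0 = i"
      using shift_pow[OF i] permutes_inverses(2)[OF pp] by metis
    then show "P X i = P (act_rows (sigma_shift n ^^ i) X) 0"
      using assms(2) pp False by (simp add: perm_equivariant_def)
  qed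
qed

end
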